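(* Every bijective (injective) sequence in a group has a proper subsequence.
   Context: Groups are written additively and are not assumed commutative. For a sequence $a_1,a_2,\dotsc$ and a finite nonempty index set $F=\{i_1<\dotsb<i_m\}\subseteq\mathbb N$, let $a_F:=a_{i_1}+\dotsb+a_{i_m}$. For finite index sets $F_1,F_2$, write $F_1<F_2$ if every element of $F_1$ is smaller than every element of $F_2$. A sequence $a_1,a_2,\dotsc$ is proper if $a_{F_1}\ne a_{F_2}$ for all nonempty finite index sets $F_1<F_2$. *)

theory Defs
  imports Main
begin

text \<open>a_F: sum of a over the finite index set F, taken in increasing index order
  (the group is not assumed commutative).\<close>
definition idx_sum :: "(nat \<Rightarrow> 'a::monoid_add) \<Rightarrow> nat set \<Rightarrow> 'a" where
  "idx_sum a F = sum_list (map a (sorted_list_of_set F))"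

definition set_less :: "nat set \<Rightarrow> nat set \<Rightarrow> bool" where
  "set_less F1 F2 = (\<forall>x\<in>F1. \<forall>y\<in>F2. x < y)"

definition proper_seq :: "(nat \<Rightarrow> 'a::group_add) \<Rightarrow> bool" where
  "proper_seq a = (\<forall>F1 F2. finite F1 \<and> finite F2 \<and> F1 \<noteq> {} \<and> F2 \<noteq> {} \<and> set_less F1 F2
      \<longrightarrow> idx_sum a F1 \<noteq> idx_sum a F2)"

end

theory Submission
  imports Defs
begin

lemma sl_map:
  assumes "strict_mono (s::nat\<Rightarrow>nat)" "finite F"
  shows "sorted_list_of_set (s ` F) = map s (sorted_list_of_set F)"
proof -
  have "sorted_wrt (<) (map s (sorted_list_of_set F))"
    using assms by (auto simp: sorted_wrt_map strict_mono_def intro: sorted_wrt_mono_rel[OF _ strict_sorted_list_of_set])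
  moreover have "set (map s (sorted_list_of_set F)) = s ` F" using assms by simp
  ultimately show ?thesis using assms(2)
    by (intro sorted_distinct_set_unique[symmetric]) (simp_all add: strict_sorted_iff)
qed

lemma idx_sum_comp:
  assumes "strict_mono (s::nat\<Rightarrow>nat)" "finite F"
  shows "idx_sum (a \<circ> s) F = idx_sum a (s ` F)"
  using sl_map[OF assms] by (simp add: idx_sum_def)

lemma sl_snoc:
  assumes "finite F" "\<forall>x\<in>F. x < (n::nat)"
  shows "sorted_list_of_set (insert n F) = sorted_list_of_set F @ [n]"
proof -
  have "sorted_wrt (<) (sorted_list_of_set F @ [n])"
    using assms by (auto simp: sorted_wrt_append)
  moreover have "set (sorted_list_of_set F @ [n]) = insert n F" using assms by auto
  ultimately have 1: "sorted (sorted_list_of_set F @ [n])" "distinct (sorted_list_of_set F @ [n])"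
      "set (sorted_list_of_set F @ [n]) = insert n F"
    by (simp_all only: strict_sorted_iff)
  have f: "finite (insert n F)" using assms(1) by simp
  show ?thesis
    by (rule sorted_distinct_set_unique[symmetric, OF 1(1,2) sorted_sorted_list_of_set
        distinct_sorted_list_of_set]) (simp only: 1(3) set_sorted_list_of_set[OF f])
qed

lemma grp: "(x::'a::group_add) = y + z \<Longrightarrow> z = - y + x"
  by (simp add: minus_add_cancel)

definition Bad :: "(nat \<Rightarrow> 'a::group_add) \<Rightarrow> nat \<Rightarrow> 'a set" where
  "Bad a m = (\<lambda>(G,H). - idx_sum a G + idx_sum a H) ` (Pow {..m} \<times> Pow {..m})"

lemma Bad_finite: "finite (Bad a m)"
  unfolding Bad_def by auto

primrec sig :: "(nat \<Rightarrow> 'a::group_add) \<Rightarrow> nat \<Rightarrow> nat" where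
  "sig a 0 = 0"
| "sig a (Suc n) = (LEAST k. sig a n < k \<and> a k \<notin> Bad a (sig a n))"

lemma ex_next:
  assumes "inj a"
  shows "\<exists>k. m < k \<and> a k \<notin> Bad a m"
proof (rule ccontr)
  assume "\<not> ?thesis"
  hence "a ` {m<..} \<subseteq> Bad a m" by auto
  hence "finite (a ` {m<..})" using Bad_finite finite_subset by blast
  hence "finite {m<..}" using assms finite_imageD inj_on_subset by blast
  thus False using infinite_Ioi by blast
qed

lemma sig_Suc:
  assumes "inj a"
  shows "sig a n < sig a (Suc n) \<and> a (sig a (Suc n)) \<notin> Bad a (sig a n)"
  using LeastI_ex[OF ex_next[OF assms, of "sig a n"]] by simp

theorem lemma2p2:
  fixes a :: "nat \<Rightarrow> 'a::group_add"
  assumes "inj a"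
  shows "\<exists>\<sigma>. strict_mono \<sigma> \<and> proper_seq (a \<circ> \<sigma>)"
proof (intro exI conjI)
  let ?s = "sig a"
  show sm: "strict_mono ?s"
    unfolding strict_mono_Suc_iff using sig_Suc[OF assms] by blast
  show "proper_seq (a \<circ> ?s)"
    unfolding proper_seq_def
  proof (intro allI impI, elim conjE)
    fix F1 F2 :: "nat set"
    assume f1: "finite F1" and f2: "finite F2" and n1: "F1 \<noteq> {}" and n2: "F2 \<noteq> {}"
      and lt: "set_less F1 F2"
    define n where "n = Max F2"
    have nin: "n \<in> F2" using f2 n2 n_def by simp
    have le: "\<forall>x\<in>F2. x \<le> n" using f2 n_def by simp
    obtain x where x: "x \<in> F1" using n1 by blast
    have "x < n" using lt x nin by (auto simp: set_less_def)
    then obtain k where k: "n = Suc k" using not0_implies_Suc by fastforce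
    define F2' where "F2' = F2 - {n}"
    have F2eq: "F2 = insert n F2'" using nin F2'_def by auto
    have F2'lt: "\<forall>y\<in>F2'. y < n" using le F2'_def by auto
    have F1lt: "\<forall>y\<in>F1. y < n" using lt nin by (auto simp: set_less_def)
    have fF2': "finite F2'" using f2 F2'_def by simp
    have sum2: "idx_sum (a \<circ> ?s) F2 = idx_sum (a \<circ> ?s) F2' + a (?s n)"
      unfolding F2eq idx_sum_def using sl_snoc[OF fF2' F2'lt] by simp
    have A: "?s ` F1 \<subseteq> {..?s k}" using F1lt k sm by (auto simp: strict_mono_less_eq)
    have B: "?s ` F2' \<subseteq> {..?s k}" using F2'lt k sm by (auto simp: strict_mono_less_eq)
    show "idx_sum (a \<circ> ?s) F1 \<noteq> idx_sum (a \<circ> ?s) F2"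
    proof
      assume eq: "idx_sum (a \<circ> ?s) F1 = idx_sum (a \<circ> ?s) F2"
      hence "a (?s n) = - idx_sum (a \<circ> ?s) F2' + idx_sum (a \<circ> ?s) F1"
        using sum2 eq grp by metis
      also have "\<dots> = - idx_sum a (?s ` F2') + idx_sum a (?s ` F1)"
        using idx_sum_comp[OF sm fF2', of a] idx_sum_comp[OF sm f1, of a] by simp
      finally have "a (?s n) \<in> Bad a (?s k)"
        unfolding Bad_def using A B by (intro image_eqI[where x="(?s ` F2', ?s ` F1)"]) auto
      thus False using sig_Suc[OF assms, of k] k by simp
    qed
  qed
qed

end
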